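(* Let $i,j,\ell$ be integers with $1\le i\le j\le\ell$. Suppose $\mathcal F\subset\binom{[n]}{\ell}$ is intersecting and $\tau(\mathcal F)\geq j$. Then $\Delta_i(\mathcal F)\leq \ell^{j-i}\Delta_j(\mathcal F)$.
   Context: A family is intersecting if any two members intersect. $\tau(\mathcal F)$ is the minimum size of a set meeting all members of $\mathcal F$. For $S\subset[n]$, $\mathcal F(S)=\{F\setminus S: S\subset F\in\mathcal F\}$, and $\Delta_i(\mathcal F)=\max_{S\in\binom{[n]}{i}}|\mathcal F(S)|$. *)

theory Defs
  imports Main
begin

definition intersecting :: "nat set set \<Rightarrow> bool" where
  "intersecting \<F> \<longleftrightarrow> (\<forall>A\<in>\<F>. \<forall>B\<in>\<F>. A \<inter> B \<noteq> {})"

definition tau :: "nat set set \<Rightarrow> nat" where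
  "tau \<F> = (LEAST t. \<exists>T. finite T \<and> card T = t \<and> (\<forall>F\<in>\<F>. T \<inter> F \<noteq> {}))"

definition link :: "nat set set \<Rightarrow> nat set \<Rightarrow> nat set set" where
  "link \<F> S = {F - S | F. F \<in> \<F> \<and> S \<subseteq> F}"

definition Delta :: "nat \<Rightarrow> nat \<Rightarrow> nat set set \<Rightarrow> nat" where
  "Delta n i \<F> = Max ((\<lambda>S. card (link \<F> S)) ` {S. S \<subseteq> {1..n} \<and> card S = i})"

end

theory Submission
  imports Defs
begin

lemma link_card:
  "card (link F S) = card {G\<in>F. S \<subseteq> G}"
proof -
  have "link F S = (\<lambda>G. G - S) ` {G\<in>F. S \<subseteq> G}" unfolding link_def by auto
  moreover have "inj_on (\<lambda>G. G - S) {G\<in>F. S \<subseteq> G}"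
    by (rule inj_onI) (metis Diff_partition mem_Collect_eq)
  ultimately show ?thesis by (simp add: card_image)
qed

lemma Delta_ge:
  assumes "S \<subseteq> {1..n}" "card S = k"
  shows "card (link F S) \<le> Delta n k F"
proof -
  have "finite {S. S \<subseteq> {1..(n::nat)} \<and> card S = k}"
    by (rule finite_subset[of _ "Pow {1..n}"]) auto
  then show ?thesis unfolding Delta_def using assms by (intro Max_ge) auto
qed

lemma Delta_attained:
  assumes "k \<le> n"
  shows "\<exists>S. S \<subseteq> {1..n} \<and> card S = k \<and> Delta n k F = card (link F S)"
proof -
  have fin: "finite {S. S \<subseteq> {1..(n::nat)} \<and> card S = k}"
    by (rule finite_subset[of _ "Pow {1..n}"]) auto
  obtain S where "S \<subseteq> {1..n}" "card S = k"
    using assms by (metis card_atLeastAtMost diff_Suc_1 obtain_subset_with_card_n)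
  then have ne: "{S. S \<subseteq> {1..(n::nat)} \<and> card S = k} \<noteq> {}" by auto
  have "Max ((\<lambda>S. card (link F S)) ` {S. S \<subseteq> {1..n} \<and> card S = k})
     \<in> (\<lambda>S. card (link F S)) ` {S. S \<subseteq> {1..n} \<and> card S = k}"
    using ne by (intro Max_in finite_imageI fin) auto
  then obtain S where "S \<in> {S. S \<subseteq> {1..n} \<and> card S = k}"
     "Max ((\<lambda>S. card (link F S)) ` {S. S \<subseteq> {1..n} \<and> card S = k}) = card (link F S)"
    by (elim imageE) metis
  then show ?thesis unfolding Delta_def by blast
qed

lemma tau_le:
  assumes "finite T" "\<forall>F\<in>\<F>. T \<inter> F \<noteq> {}"
  shows "tau \<F> \<le> card T"
  unfolding tau_def using assms by (intro Least_le) auto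

lemma step:
  assumes F: "\<F> \<subseteq> {A. A \<subseteq> {1..n} \<and> card A = l}"
    and inter: "intersecting \<F>" and k: "k < tau \<F>" and kn: "k \<le> n"
  shows "Delta n k \<F> \<le> l * Delta n (Suc k) \<F>"
proof -
  obtain S where S: "S \<subseteq> {1..n}" "card S = k" "Delta n k \<F> = card (link \<F> S)"
    using Delta_attained[OF kn] by blast
  have finS: "finite S" using S(1) finite_subset by blast
  have "\<not> (\<forall>F\<in>\<F>. S \<inter> F \<noteq> {})"
    using tau_le[OF finS] k S(2) by fastforce
  then obtain F0 where F0: "F0 \<in> \<F>" "S \<inter> F0 = {}" by blast
  have F0s: "F0 \<subseteq> {1..n}" "card F0 = l" using F F0 by auto
  have finF: "finite \<F>"
    by (rule finite_subset[of _ "Pow {1..n}"]) (use F in auto)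
  have sub: "{G\<in>\<F>. S \<subseteq> G} \<subseteq> (\<Union>x\<in>F0. {G\<in>\<F>. insert x S \<subseteq> G})"
  proof
    fix G assume G: "G \<in> {G\<in>\<F>. S \<subseteq> G}"
    then have "G \<inter> F0 \<noteq> {}" using inter F0 unfolding intersecting_def by auto
    then obtain x where "x \<in> G" "x \<in> F0" by blast
    then show "G \<in> (\<Union>x\<in>F0. {G\<in>\<F>. insert x S \<subseteq> G})" using G by auto
  qed
  have finF0: "finite F0" using F0s finite_subset by blast
  have "Delta n k \<F> = card {G\<in>\<F>. S \<subseteq> G}" using S(3) link_card by simp
  also have "\<dots> \<le> card (\<Union>x\<in>F0. {G\<in>\<F>. insert x S \<subseteq> G})"
    by (rule card_mono) (use finF finF0 sub in \<open>auto intro: finite_subset\<close>)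
  also have "\<dots> \<le> (\<Sum>x\<in>F0. card {G\<in>\<F>. insert x S \<subseteq> G})"
    by (rule card_UN_le[OF finF0])
  also have "\<dots> \<le> (\<Sum>x\<in>F0. Delta n (Suc k) \<F>)"
  proof (rule sum_mono)
    fix x assume x: "x \<in> F0"
    have "x \<notin> S" using x F0(2) by auto
    then have "card (insert x S) = Suc k" using finS S(2) by simp
    moreover have "insert x S \<subseteq> {1..n}" using x F0s S(1) by auto
    ultimately show "card {G\<in>\<F>. insert x S \<subseteq> G} \<le> Delta n (Suc k) \<F>"
      using Delta_ge link_card by metis
  qed
  also have "\<dots> = l * Delta n (Suc k) \<F>" using F0s by simp
  finally show ?thesis .
qed

theorem proposition5p2:
  fixes n i j l :: nat and \<F> :: "nat set set"
  assumes "1 \<le> i" "i \<le> j" "j \<le> l"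
    and "\<F> \<subseteq> {A. A \<subseteq> {1..n} \<and> card A = l}"
    and "intersecting \<F>"
    and "tau \<F> \<ge> j"
  shows "Delta n i \<F> \<le> l ^ (j - i) * Delta n j \<F>"
proof -
  have ne: "\<F> \<noteq> {}"
  proof
    assume "\<F> = {}"
    then have "tau \<F> \<le> card ({}::nat set)" by (intro tau_le) auto
    then show False using assms by simp
  qed
  then obtain A where "A \<in> \<F>" by blast
  then have "A \<subseteq> {1..n}" "card A = l" using assms(4) by auto
  then have ln: "l \<le> n" by (metis card_atLeastAtMost card_mono diff_Suc_1 finite_atLeastAtMost)
  have main: "\<forall>m. m + d = j \<longrightarrow> Delta n m \<F> \<le> l ^ d * Delta n j \<F>" for d
  proof (induction d)
    case 0 then show ?case by simp
  next
    case (Suc d)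
    show ?case
    proof (intro allI impI)
      fix m assume m: "m + Suc d = j"
      have "Delta n m \<F> \<le> l * Delta n (Suc m) \<F>"
        using step[OF assms(4,5)] m assms ln by simp
      also have "\<dots> \<le> l * (l ^ d * Delta n j \<F>)"
        using Suc.IH m by simp
      finally show "Delta n m \<F> \<le> l ^ Suc d * Delta n j \<F>" by simp
    qed
  qed
  show ?thesis using main[of "j - i"] assms by simp
qed

end
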